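(* Let $\mathcal{M}$ be a saturated model of Presburger arithmetic, $\mathcal{M}_0\preceq\mathcal{M}$ a small elementary submodel, $C\subseteq\mathcal{M}^n$ an open cell definable over $\mathcal{M}_0$, and $a\in C$ with $\dim(a/\mathcal{M}_0)=n$. Then there is an $n$-box $B$ around $a$ with $B\subseteq C$.
   Context: Presburger arithmetic is $\mathrm{Th}(\mathbb{Z},+,-,<,0,1,\{\equiv_n\}_n)$. Cells are defined inductively: a $0$-cell is a point of $\mathrm{dcl}(B)$; a $1$-cell is an infinite set $\{x:\alpha\ \square_1\ x\ \square_2\ \beta,\ x\equiv_N c\}$ with $\alpha,\beta\in\mathrm{dcl}(B)$, $0\le c<N$ integers, $\square_j$ either $\le$ or no condition; given an $(i_1,\dots,i_n)$-cell $C'$, an $(i_1,\dots,i_n,0)$-cell is the graph of a $B$-linear function on $C'$ and an $(i_1,\dots,i_n,1)$-cell is $\{(x,t):x\in C',\ \alpha(x)\ \square_1\ t\ \square_2\ \beta(x),\ t\equiv_N k\}$ with $\alpha,\beta$ $B$-linear on $C'$ and fiber sizes not uniformly bounded. Here a $B$-linear function is $f(x)=\sum_i s_i\frac{x_i-c_i}{k_i}+\gamma$ with integers $s_i,k_i$, $0\le c_i<k_i$, $x_i\equiv_{k_i}c_i$, $\gamma\in\mathrm{dcl}(B)$. The dimension of an $(i_1,\dots,i_n)$-cell is $\sum_j i_j$; a cell in $\mathcal{M}^n$ is open if its dimension is $n$. The dimension of a tuple over $\mathcal{M}_0$ is the size of a maximal dcl-independent (over $\mathcal{M}_0$) subset of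 its coordinates. A box around $p\in\mathcal{M}^n$ is a product $B_1\times\dots\times B_n$ of sets $B_i=\{x:\alpha_i\ \square_1\ x\ \square_2\ \beta_i,\ x\equiv_{N_i}c_i\}$ with $p_i\in B_i$ and $[\alpha_i,p_i]$, $[p_i,\beta_i]$ infinite. *)

theory Defs
  imports Main
begin

section \<open>First-order language of Presburger arithmetic (deep embedding)\<close>

text \<open>Terms and formulas in the language (+,-,<,0,1,{cong_n}_n); constants 'c are parameters.\<close>

datatype 'c tm = TVar nat | TCst 'c | TZero | TOne | TAdd "'c tm" "'c tm" | TSub "'c tm" "'c tm"

datatype 'c fm = FLess "'c tm" "'c tm" | FEq "'c tm" "'c tm" | FCong nat "'c tm" "'c tm"
  | FNeg "'c fm" | FConj "'c fm" "'c fm" | FEx nat "'c fm"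

fun fv_tm :: "'c tm \<Rightarrow> nat set" where
  "fv_tm (TVar n) = {n}"
| "fv_tm (TCst c) = {}"
| "fv_tm TZero = {}"
| "fv_tm TOne = {}"
| "fv_tm (TAdd s t) = fv_tm s \<union> fv_tm t"
| "fv_tm (TSub s t) = fv_tm s \<union> fv_tm t"

fun fv :: "'c fm \<Rightarrow> nat set" where
  "fv (FLess s t) = fv_tm s \<union> fv_tm t"
| "fv (FEq s t) = fv_tm s \<union> fv_tm t"
| "fv (FCong n s t) = fv_tm s \<union> fv_tm t"
| "fv (FNeg p) = fv p"
| "fv (FConj p q) = fv p \<union> fv q"
| "fv (FEx n p) = fv p - {n}"

text \<open>A structure for the language; its universe is the whole type 'a.\<close>

record 'a pstr =
  padd :: "'a \<Rightarrow> 'a \<Rightarrow> 'a"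
  psub :: "'a \<Rightarrow> 'a \<Rightarrow> 'a"
  pless :: "'a \<Rightarrow> 'a \<Rightarrow> bool"
  pzero :: 'a
  pone :: 'a
  pcong :: "nat \<Rightarrow> 'a \<Rightarrow> 'a \<Rightarrow> bool"

fun ev :: "'a pstr \<Rightarrow> ('c \<Rightarrow> 'a) \<Rightarrow> (nat \<Rightarrow> 'a) \<Rightarrow> 'c tm \<Rightarrow> 'a" where
  "ev S I v (TVar n) = v n"
| "ev S I v (TCst c) = I c"
| "ev S I v TZero = pzero S"
| "ev S I v TOne = pone S"
| "ev S I v (TAdd s t) = padd S (ev S I v s) (ev S I v t)"
| "ev S I v (TSub s t) = psub S (ev S I v s) (ev S I v t)"

text \<open>Satisfaction, quantifiers ranging over the domain D (D = UNIV for the model itself,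
  D = M0 for a substructure).\<close>

fun sat :: "'a pstr \<Rightarrow> 'a set \<Rightarrow> ('c \<Rightarrow> 'a) \<Rightarrow> (nat \<Rightarrow> 'a) \<Rightarrow> 'c fm \<Rightarrow> bool" where
  "sat S D I v (FLess s t) = pless S (ev S I v s) (ev S I v t)"
| "sat S D I v (FEq s t) = (ev S I v s = ev S I v t)"
| "sat S D I v (FCong n s t) = pcong S n (ev S I v s) (ev S I v t)"
| "sat S D I v (FNeg p) = (\<not> sat S D I v p)"
| "sat S D I v (FConj p q) = (sat S D I v p \<and> sat S D I v q)"
| "sat S D I v (FEx n p) = (\<exists>x\<in>D. sat S D I (v(n := x)) p)"

definition Zstr :: "int pstr" where
  "Zstr = \<lparr>padd = (+), psub = (-), pless = (<), pzero = 0, pone = 1,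
           pcong = (\<lambda>n x y. x mod int n = y mod int n)\<rparr>"

definition models_PrA :: "'a pstr \<Rightarrow> bool" where
  "models_PrA S \<longleftrightarrow> (\<forall>\<phi> :: nat fm. set_fm \<phi> = {} \<and> fv \<phi> = {} \<longrightarrow>
      (sat Zstr UNIV (\<lambda>_. 0) (\<lambda>_. 0) \<phi> \<longleftrightarrow> sat S UNIV (\<lambda>_. undefined) (\<lambda>_. undefined) \<phi>))"

text \<open>A is small: |A| < |M| (the universe of the model is UNIV :: 'a set).\<close>

definition small :: "'a set \<Rightarrow> bool" where
  "small A \<longleftrightarrow> \<not> (\<exists>f :: 'a \<Rightarrow> 'a. inj f \<and> range f \<subseteq> A)"

text \<open>Saturation (|M|-saturation): every finitely satisfiable set of formulas in one variable
  with parameters from a small set is realized.  A formula in the single variable x is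
  evaluated by assigning x to every variable.\<close>

definition saturated :: "'a pstr \<Rightarrow> bool" where
  "saturated S \<longleftrightarrow> (\<forall>A (\<Sigma> :: 'a fm set). small A \<and> (\<forall>\<phi>\<in>\<Sigma>. set_fm \<phi> \<subseteq> A) \<and>
      (\<forall>\<Sigma>0\<subseteq>\<Sigma>. finite \<Sigma>0 \<longrightarrow> (\<exists>x. \<forall>\<phi>\<in>\<Sigma>0. sat S UNIV id (\<lambda>_. x) \<phi>)) \<longrightarrow>
      (\<exists>x. \<forall>\<phi>\<in>\<Sigma>. sat S UNIV id (\<lambda>_. x) \<phi>))"

definition elem_sub :: "'a pstr \<Rightarrow> 'a set \<Rightarrow> bool" where
  "elem_sub S M0 \<longleftrightarrow> pzero S \<in> M0 \<and> pone S \<in> M0 \<and>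
     (\<forall>x\<in>M0. \<forall>y\<in>M0. padd S x y \<in> M0 \<and> psub S x y \<in> M0) \<and>
     (\<forall>(\<phi> :: 'a fm) v. set_fm \<phi> \<subseteq> M0 \<and> range v \<subseteq> M0 \<longrightarrow>
        (sat S M0 id v \<phi> \<longleftrightarrow> sat S UNIV id v \<phi>))"

definition dcl :: "'a pstr \<Rightarrow> 'a set \<Rightarrow> 'a set" where
  "dcl S B = {b. \<exists>\<phi> :: 'a fm. set_fm \<phi> \<subseteq> B \<and> (\<forall>x. sat S UNIV id (\<lambda>_. x) \<phi> \<longleftrightarrow> x = b)}"

fun nmul :: "'a pstr \<Rightarrow> nat \<Rightarrow> 'a \<Rightarrow> 'a" where
  "nmul S 0 x = pzero S"
| "nmul S (Suc n) x = padd S x (nmul S n x)"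

definition zmul :: "'a pstr \<Rightarrow> int \<Rightarrow> 'a \<Rightarrow> 'a" where
  "zmul S k x = (if 0 \<le> k then nmul S (nat k) x else psub S (pzero S) (nmul S (nat (- k)) x))"

definition const :: "'a pstr \<Rightarrow> nat \<Rightarrow> 'a" where
  "const S c = nmul S c (pone S)"

text \<open>y / k, the unique z with k z = y (used only when y is divisible by k).\<close>
definition divk :: "'a pstr \<Rightarrow> nat \<Rightarrow> 'a \<Rightarrow> 'a" where
  "divk S k y = (THE z. nmul S k z = y)"

definition ple :: "'a pstr \<Rightarrow> 'a \<Rightarrow> 'a \<Rightarrow> bool" where
  "ple S x y \<longleftrightarrow> pless S x y \<or> x = y"

text \<open>Optional bounds: None = no condition, Some a = the condition a \<le> t (resp. t \<le> a).\<close>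
definition lowok :: "'a pstr \<Rightarrow> 'a option \<Rightarrow> 'a \<Rightarrow> bool" where
  "lowok S lo t = (case lo of None \<Rightarrow> True | Some a \<Rightarrow> ple S a t)"

definition upok :: "'a pstr \<Rightarrow> 'a option \<Rightarrow> 'a \<Rightarrow> bool" where
  "upok S hi t = (case hi of None \<Rightarrow> True | Some b \<Rightarrow> ple S t b)"

section \<open>Cells\<close>

definition blin :: "'a pstr \<Rightarrow> 'a set \<Rightarrow> 'a list set \<Rightarrow> ('a list \<Rightarrow> 'a) \<Rightarrow> bool" where
  "blin S B C f \<longleftrightarrow> (\<exists>(s :: nat \<Rightarrow> int) (k :: nat \<Rightarrow> nat) (c :: nat \<Rightarrow> nat). \<exists>\<gamma>\<in>dcl S B.
     (\<forall>i. c i < k i) \<and>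
     (\<forall>x\<in>C. \<forall>i<length x. pcong S (k i) (x ! i) (const S (c i))) \<and>
     (\<forall>x\<in>C. f x = foldr (padd S)
        (map (\<lambda>i. zmul S (s i) (divk S (k i) (psub S (x ! i) (const S (c i))))) [0..<length x]) \<gamma>))"

text \<open>cell S B ty C: C is a ty-cell over B, where ty is the list (i_1,...,i_n) of 0s and 1s.\<close>

inductive cell :: "'a pstr \<Rightarrow> 'a set \<Rightarrow> nat list \<Rightarrow> 'a list set \<Rightarrow> bool" for S B where
  c0: "g \<in> dcl S B \<Longrightarrow> cell S B [0] {[g]}"
| c1: "(\<forall>a. lo = Some a \<longrightarrow> a \<in> dcl S B) \<Longrightarrow> (\<forall>b. hi = Some b \<longrightarrow> b \<in> dcl S B) \<Longrightarrow> c < N \<Longrightarrow>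
       X = {t. lowok S lo t \<and> upok S hi t \<and> pcong S N t (const S c)} \<Longrightarrow> infinite X \<Longrightarrow>
       cell S B [1] ((\<lambda>t. [t]) ` X)"
| cgraph: "cell S B ty C \<Longrightarrow> blin S B C f \<Longrightarrow> cell S B (ty @ [0]) ((\<lambda>x. x @ [f x]) ` C)"
| cint: "cell S B ty C \<Longrightarrow> (\<forall>a. lo = Some a \<longrightarrow> blin S B C a) \<Longrightarrow> (\<forall>b. hi = Some b \<longrightarrow> blin S B C b) \<Longrightarrow>
       c < N \<Longrightarrow>
       D = {y. \<exists>x\<in>C. \<exists>t. y = x @ [t] \<and> lowok S (map_option (\<lambda>a. a x) lo) t \<and>
                 upok S (map_option (\<lambda>b. b x) hi) t \<and> pcong S N t (const S c)} \<Longrightarrow>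
       \<not> (\<exists>m :: nat. \<forall>x\<in>C. finite {t. x @ [t] \<in> D} \<and> card {t. x @ [t] \<in> D} \<le> m) \<Longrightarrow>
       cell S B (ty @ [1]) D"

section \<open>Dimension of a tuple over M0\<close>

definition indep :: "'a pstr \<Rightarrow> 'a set \<Rightarrow> 'a list \<Rightarrow> nat set \<Rightarrow> bool" where
  "indep S M0 a I \<longleftrightarrow> (\<forall>i\<in>I. a ! i \<notin> dcl S (M0 \<union> (\<lambda>j. a ! j) ` (I - {i})))"

definition dimo :: "'a pstr \<Rightarrow> 'a set \<Rightarrow> 'a list \<Rightarrow> nat" where
  "dimo S M0 a = Max {card I | I. I \<subseteq> {..<length a} \<and> indep S M0 a I}"

section \<open>Boxes\<close>

definition bset :: "'a pstr \<Rightarrow> 'a option \<Rightarrow> 'a option \<Rightarrow> nat \<Rightarrow> nat \<Rightarrow> 'a set" where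
  "bset S lo hi N c = {x. lowok S lo x \<and> upok S hi x \<and> pcong S N x (const S c)}"

definition icc :: "'a pstr \<Rightarrow> 'a \<Rightarrow> 'a \<Rightarrow> 'a set" where
  "icc S a b = {x. ple S a x \<and> ple S x b}"

definition box :: "'a pstr \<Rightarrow> nat \<Rightarrow> 'a list \<Rightarrow> 'a list set \<Rightarrow> bool" where
  "box S n p X \<longleftrightarrow> length p = n \<and>
    (\<exists>(lo :: nat \<Rightarrow> 'a option) (hi :: nat \<Rightarrow> 'a option) (N :: nat \<Rightarrow> nat) (c :: nat \<Rightarrow> nat).
      (\<forall>i<n. c i < N i) \<and>
      X = {x. length x = n \<and> (\<forall>i<n. x ! i \<in> bset S (lo i) (hi i) (N i) (c i))} \<and>
      (\<forall>i<n. p ! i \<in> bset S (lo i) (hi i) (N i) (c i) \<and>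
         (\<forall>a. lo i = Some a \<longrightarrow> infinite (icc S a (p ! i))) \<and>
         (\<forall>b. hi i = Some b \<longrightarrow> infinite (icc S (p ! i) b))))"

end

theory Submission
  imports Defs
begin



definition FAll :: "nat \<Rightarrow> 'c fm \<Rightarrow> 'c fm" where "FAll n p = FNeg (FEx n (FNeg p))"
definition FImp :: "'c fm \<Rightarrow> 'c fm \<Rightarrow> 'c fm" where "FImp p q = FNeg (FConj p (FNeg q))"
definition FOr :: "'c fm \<Rightarrow> 'c fm \<Rightarrow> 'c fm" where "FOr p q = FNeg (FConj (FNeg p) (FNeg q))"
definition FLe :: "'c tm \<Rightarrow> 'c tm \<Rightarrow> 'c fm" where "FLe s t = FOr (FLess s t) (FEq s t)"

lemma sat_extra[simp]:
  "sat S D I v (FAll n p) = (\<forall>x\<in>D. sat S D I (v(n:=x)) p)"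
  "sat S D I v (FImp p q) = (sat S D I v p \<longrightarrow> sat S D I v q)"
  "sat S D I v (FOr p q) = (sat S D I v p \<or> sat S D I v q)"
  "sat S D I v (FLe s t) = ple S (ev S I v s) (ev S I v t)"
  by (auto simp: FAll_def FImp_def FOr_def FLe_def ple_def)

lemma fv_extra[simp]:
  "fv (FAll n p) = fv p - {n}" "fv (FImp p q) = fv p \<union> fv q" "fv (FOr p q) = fv p \<union> fv q"
  "fv (FLe s t) = fv_tm s \<union> fv_tm t"
  by (auto simp: FAll_def FImp_def FOr_def FLe_def)

lemma set_extra[simp]:
  "set_fm (FAll n p) = set_fm p" "set_fm (FImp p q) = set_fm p \<union> set_fm q"
  "set_fm (FOr p q) = set_fm p \<union> set_fm q"
  "set_fm (FLe s t) = set_tm s \<union> set_tm t"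
  by (auto simp: FAll_def FImp_def FOr_def FLe_def)

fun ntm :: "nat \<Rightarrow> 'c tm \<Rightarrow> 'c tm" where
  "ntm 0 t = TZero" | "ntm (Suc n) t = TAdd t (ntm n t)"
definition ztm :: "int \<Rightarrow> 'c tm \<Rightarrow> 'c tm" where
  "ztm s t = (if 0 \<le> s then ntm (nat s) t else TSub TZero (ntm (nat (-s)) t))"
definition ctm :: "nat \<Rightarrow> 'c tm" where "ctm c = ntm c TOne"

lemma ev_ntm[simp]: "ev S I v (ntm k t) = nmul S k (ev S I v t)"
  by (induction k) auto
lemma ev_ztm[simp]: "ev S I v (ztm s t) = zmul S s (ev S I v t)"
  by (simp add: ztm_def zmul_def)
lemma ev_ctm[simp]: "ev S I v (ctm c) = const S c"
  by (simp add: ctm_def const_def)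
lemma fv_ntm[simp]: "fv_tm (ntm k t) = (if k = 0 then {} else fv_tm t)"
  by (induction k) auto
lemma set_ntm[simp]: "set_tm (ntm k t) = (if k = 0 then {} else set_tm t)"
  by (induction k) auto
lemma fv_ztm[simp]: "fv_tm (ztm s t) = (if s = 0 then {} else fv_tm t)"
  by (simp add: ztm_def)
lemma set_ztm[simp]: "set_tm (ztm s t) = (if s = 0 then {} else set_tm t)"
  by (simp add: ztm_def)
lemma fv_ctm[simp]: "fv_tm (ctm c) = {}" by (simp add: ctm_def)
lemma set_ctm[simp]: "set_tm (ctm c) = {}" by (simp add: ctm_def)

lemma nmulZ[simp]: "nmul Zstr k x = int k * x"
  by (induction k) (auto simp: Zstr_def algebra_simps)
lemma Zs[simp]: "padd Zstr = (+)" "psub Zstr = (-)" "pless Zstr = (<)" "pzero Zstr = 0" "pone Zstr = 1"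
  "pcong Zstr = (\<lambda>n x y. x mod int n = y mod int n)" "ple Zstr = (\<le>)"
  by (auto simp: Zstr_def ple_def fun_eq_iff)
lemma zmulZ[simp]: "zmul Zstr s x = s * x"
  by (simp add: zmul_def)
lemma constZ[simp]: "const Zstr c = int c"
  by (simp add: const_def)

locale prA = fixes S :: "'a pstr" assumes M: "models_PrA S"
begin

lemma trI: "sat Zstr UNIV (\<lambda>_. 0) (\<lambda>_. 0) (\<phi>::nat fm) \<Longrightarrow> set_fm \<phi> = {} \<Longrightarrow> fv \<phi> = {} \<Longrightarrow>
   sat S UNIV (\<lambda>_. undefined) (\<lambda>_. undefined) \<phi>"
  using M unfolding models_PrA_def by blast

lemma trJ: "sat Zstr UNIV (\<lambda>_. 0) (\<lambda>_. 0) (\<phi>::nat fm) \<Longrightarrow> set_fm \<phi> = {} \<Longrightarrow> fv \<phi> = {} \<Longrightarrow>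
   (sat S UNIV (\<lambda>_. undefined) (\<lambda>_. undefined) \<phi> \<Longrightarrow> P) \<Longrightarrow> P"
  using M unfolding models_PrA_def by blast

lemma tr: "set_fm \<phi> = {} \<Longrightarrow> fv \<phi> = {} \<Longrightarrow> sat Zstr UNIV (\<lambda>_. 0) (\<lambda>_. 0) (\<phi>::nat fm) \<Longrightarrow>
   sat S UNIV (\<lambda>_. undefined) (\<lambda>_. undefined) \<phi>"
  using M unfolding models_PrA_def by blast

abbreviation X0 where "X0 \<equiv> TVar 0"
abbreviation X1 where "X1 \<equiv> TVar 1"
abbreviation X2 where "X2 \<equiv> TVar 2"
abbreviation X3 where "X3 \<equiv> TVar 3"
abbreviation X4 where "X4 \<equiv> TVar 4"
abbreviation X5 where "X5 \<equiv> TVar 5"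
abbreviation X6 where "X6 \<equiv> TVar 6"

abbreviation pl (infixl "\<oplus>" 65) where "pl x y \<equiv> padd S x y"
abbreviation mi (infixl "\<ominus>" 65) where "mi x y \<equiv> psub S x y"
abbreviation lt (infix "\<prec>" 50) where "lt x y \<equiv> pless S x y"
abbreviation le (infix "\<preceq>" 50) where "le x y \<equiv> ple S x y"
abbreviation z0 where "z0 \<equiv> pzero S"
abbreviation o1 where "o1 \<equiv> pone S"

end


context prA begin
lemma S1: "x \<oplus> z0 = x"
  by (rule trJ[of "FAll 0 (FEq (TAdd X0 TZero) X0)"], (simp; presburger?), simp add: insert_Diff_if, simp add: insert_Diff_if, (simp (no_asm_use); blast?))
lemma S2: "x \<oplus> (o1 \<oplus> c) = (x \<oplus> c) \<oplus> o1"
  by (rule trJ[of "FAll 0 (FAll 1 (FEq (TAdd X0 (TAdd TOne X1)) (TAdd (TAdd X0 X1) TOne)))"], (simp; presburger?), simp add: insert_Diff_if, simp add: insert_Diff_if, (simp (no_asm_use); blast?))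
lemma S3: "\<not> (x \<preceq> y \<and> y \<prec> x)"
  by (rule trJ[of "FAll 0 (FAll 1 (FNeg (FConj (FLe X0 X1) (FLess X1 X0))))"], (simp; presburger?), simp add: insert_Diff_if, simp add: insert_Diff_if, (simp (no_asm_use); blast?))
lemma S4: "y \<prec> x \<oplus> o1 \<Longrightarrow> y \<preceq> x"
  by (rule trJ[of "FAll 0 (FAll 1 (FImp (FLess X1 (TAdd X0 TOne)) (FLe X1 X0)))"], (simp; presburger?), simp add: insert_Diff_if, simp add: insert_Diff_if, (simp (no_asm_use); blast?))
lemma S5: "x \<preceq> y \<Longrightarrow> y \<preceq> z \<Longrightarrow> x \<preceq> z"
  by (rule trJ[of "FAll 0 (FAll 1 (FAll 2 (FImp (FConj (FLe X0 X1) (FLe X1 X2)) (FLe X0 X2))))"], (simp; presburger?), simp add: insert_Diff_if, simp add: insert_Diff_if, (simp (no_asm_use); blast?))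
lemma S6: "x \<prec> x \<oplus> o1"
  by (rule trJ[of "FAll 0 (FLess X0 (TAdd X0 TOne))"], (simp; presburger?), simp add: insert_Diff_if, simp add: insert_Diff_if, (simp (no_asm_use); blast?))
lemma S7: "x \<prec> y \<Longrightarrow> y \<prec> z \<Longrightarrow> x \<prec> z"
  by (rule trJ[of "FAll 0 (FAll 1 (FAll 2 (FImp (FConj (FLess X0 X1) (FLess X1 X2)) (FLess X0 X2))))"], (simp; presburger?), simp add: insert_Diff_if, simp add: insert_Diff_if, (simp (no_asm_use); blast?))
lemma S8: "x \<preceq> y \<or> y \<prec> x"
  by (rule trJ[of "FAll 0 (FAll 1 (FOr (FLe X0 X1) (FLess X1 X0)))"], (simp; presburger?), simp add: insert_Diff_if, simp add: insert_Diff_if, (simp (no_asm_use); blast?))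
lemma S9: "x \<oplus> c = y \<oplus> c \<Longrightarrow> x = y"
  by (rule trJ[of "FAll 0 (FAll 1 (FAll 2 (FImp (FEq (TAdd X0 X2) (TAdd X1 X2)) (FEq X0 X1))))"], (simp; presburger?), simp add: insert_Diff_if, simp add: insert_Diff_if, (simp (no_asm_use); blast?))
lemma S10: "x \<oplus> (y \<oplus> z) = (x \<oplus> y) \<oplus> z"
  by (rule trJ[of "FAll 0 (FAll 1 (FAll 2 (FEq (TAdd X0 (TAdd X1 X2)) (TAdd (TAdd X0 X1) X2))))"], (simp; presburger?), simp add: insert_Diff_if, simp add: insert_Diff_if, (simp (no_asm_use); blast?))
lemma S11: "z0 \<oplus> x = x"
  by (rule trJ[of "FAll 0 (FEq (TAdd TZero X0) X0)"], (simp; presburger?), simp add: insert_Diff_if, simp add: insert_Diff_if, (simp (no_asm_use); blast?))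
lemma S12: "b \<oplus> c \<preceq> t \<Longrightarrow> c \<preceq> t \<ominus> b"
  by (rule trJ[of "FAll 0 (FAll 1 (FAll 2 (FImp (FLe (TAdd X0 X2) X1) (FLe X2 (TSub X1 X0)))))"], (simp; presburger?), simp add: insert_Diff_if, simp add: insert_Diff_if, (simp (no_asm_use); blast?))
lemma S14: "c \<preceq> d \<Longrightarrow> (a \<ominus> d) \<oplus> c \<preceq> a"
  by (rule trJ[of "FAll 0 (FAll 1 (FAll 2 (FImp (FLe X2 X1) (FLe (TAdd (TSub X0 X1) X2) X0))))"], (simp; presburger?), simp add: insert_Diff_if, simp add: insert_Diff_if, (simp (no_asm_use); blast?))
lemma S15: "c \<preceq> d \<Longrightarrow> a \<oplus> c \<preceq> a \<oplus> d"
  by (rule trJ[of "FAll 0 (FAll 1 (FAll 2 (FImp (FLe X2 X1) (FLe (TAdd X0 X2) (TAdd X0 X1)))))"], (simp; presburger?), simp add: insert_Diff_if, simp add: insert_Diff_if, (simp (no_asm_use); blast?))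
lemma S16: "z0 \<preceq> d \<Longrightarrow> a \<ominus> d \<preceq> a \<and> a \<preceq> a \<oplus> d"
  by (rule trJ[of "FAll 0 (FAll 1 (FImp (FLe TZero X1) (FConj (FLe (TSub X0 X1) X0) (FLe X0 (TAdd X0 X1)))))"], (simp; presburger?), simp add: insert_Diff_if, simp add: insert_Diff_if, (simp (no_asm_use); blast?))
lemma S17: "p \<preceq> q \<oplus> r \<Longrightarrow> P \<preceq> Q \<oplus> R \<Longrightarrow> p \<oplus> P \<preceq> (q \<oplus> Q) \<oplus> (r \<oplus> R)"
  by (rule trJ[of "FAll 0 (FAll 1 (FAll 2 (FAll 3 (FAll 4 (FAll 5 (FImp (FConj (FLe X0 (TAdd X1 X2)) (FLe X3 (TAdd X4 X5)))
     (FLe (TAdd X0 X3) (TAdd (TAdd X1 X4) (TAdd X2 X5)))))))))"], (simp; presburger?), simp add: insert_Diff_if, simp add: insert_Diff_if, (simp (no_asm_use); blast?))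
lemma S19: "d \<oplus> D \<preceq> t \<ominus> p \<Longrightarrow> al \<preceq> p \<oplus> D \<Longrightarrow> t \<ominus> d \<preceq> t' \<Longrightarrow> al \<preceq> t'"
proof -
  have Z: "\<forall>d D t p al t'::int. d + D \<le> t - p \<and> al \<le> p + D \<and> t - d \<le> t' \<longrightarrow> al \<le> t'"
    by (intro allI impI) linarith
  show "d \<oplus> D \<preceq> t \<ominus> p \<Longrightarrow> al \<preceq> p \<oplus> D \<Longrightarrow> t \<ominus> d \<preceq> t' \<Longrightarrow> al \<preceq> t'"
  by (rule trJ[of "FAll 0 (FAll 1 (FAll 2 (FAll 3 (FAll 4 (FAll 5 (FImp (FConj (FLe (TAdd X0 X1) (TSub X2 X3))
     (FConj (FLe X4 (TAdd X3 X1)) (FLe (TSub X2 X0) X5))) (FLe X4 X5)))))))"]) (use Z in \<open>simp\<close>, simp add: insert_Diff_if, simp add: insert_Diff_if, (simp (no_asm_use); blast?))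
qed
lemma S20: "q \<preceq> be \<oplus> D \<Longrightarrow> d \<oplus> D \<preceq> q \<ominus> t \<Longrightarrow> t' \<preceq> t \<oplus> d \<Longrightarrow> t' \<preceq> be"
proof -
  have Z: "\<forall>d D t q be t'::int. q \<le> be + D \<and> d + D \<le> q - t \<and> t' \<le> t + d \<longrightarrow> t' \<le> be"
    by (intro allI impI) linarith
  show "q \<preceq> be \<oplus> D \<Longrightarrow> d \<oplus> D \<preceq> q \<ominus> t \<Longrightarrow> t' \<preceq> t \<oplus> d \<Longrightarrow> t' \<preceq> be"
  by (rule trJ[of "FAll 0 (FAll 1 (FAll 2 (FAll 3 (FAll 4 (FAll 5 (FImp (FConj (FLe X3 (TAdd X4 X1))
     (FConj (FLe (TAdd X0 X1) (TSub X3 X2)) (FLe X5 (TAdd X2 X0)))) (FLe X5 X4)))))))"]) (use Z in \<open>simp\<close>, simp add: insert_Diff_if, simp add: insert_Diff_if, (simp (no_asm_use); blast?))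
qed
lemma S21: "x \<prec> y \<Longrightarrow> x \<preceq> y" by (simp add: ple_def)
lemma S22: "x \<preceq> x" by (simp add: ple_def)
end



fun rvt :: "(nat \<Rightarrow> nat) \<Rightarrow> 'c tm \<Rightarrow> 'c tm" where
  "rvt r (TVar i) = TVar (r i)" | "rvt r (TCst c) = TCst c" | "rvt r TZero = TZero"
| "rvt r TOne = TOne" | "rvt r (TAdd s t) = TAdd (rvt r s) (rvt r t)"
| "rvt r (TSub s t) = TSub (rvt r s) (rvt r t)"

fun rv :: "nat \<Rightarrow> (nat \<Rightarrow> nat) \<Rightarrow> 'c fm \<Rightarrow> 'c fm" where
  "rv K r (FLess s t) = FLess (rvt r s) (rvt r t)"
| "rv K r (FEq s t) = FEq (rvt r s) (rvt r t)"
| "rv K r (FCong n s t) = FCong n (rvt r s) (rvt r t)"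
| "rv K r (FNeg p) = FNeg (rv K r p)"
| "rv K r (FConj p q) = FConj (rv K r p) (rv K r q)"
| "rv K r (FEx n p) = FEx (n + K) (rv K (r(n := n + K)) p)"

lemma ev_rvt: "ev S I w (rvt r t) = ev S I (w \<circ> r) t" by (induction t) auto
lemma set_rvt: "set_tm (rvt r t) = set_tm t" by (induction t) auto
lemma set_rv: "set_fm (rv K r p) = set_fm p" by (induction p arbitrary: r) (auto simp: set_rvt)

lemma sat_rv: "(\<forall>i. r i < K \<or> r i = i + K) \<Longrightarrow> sat S D I w (rv K r p) = sat S D I (w \<circ> r) p"
proof (induction p arbitrary: r w)
  case (FEx n p)
  have inv: "\<forall>i. (r(n:=n+K)) i < K \<or> (r(n:=n+K)) i = i + K" using FEx.prems by auto
  have eq: "w(n+K:=x) \<circ> r(n:=n+K) = (w\<circ>r)(n:=x)" for x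
  proof (rule ext)
    fix i show "(w(n+K:=x) \<circ> r(n:=n+K)) i = ((w\<circ>r)(n:=x)) i"
      using FEx.prems[rule_format, of i] by (cases "i = n") auto
  qed
  show ?case by (simp only: rv.simps sat.simps FEx.IH[OF inv] eq)
qed (auto simp: ev_rvt)

lemma dcl_un:
  assumes "b \<in> dcl S B" "set_fm \<psi> = {}" "\<And>x. sat S UNIV id ((\<lambda>_. x)(1 := b)) \<psi> \<longleftrightarrow> x = t"
  shows "t \<in> dcl S B"
proof -
  obtain \<phi> where \<phi>: "set_fm \<phi> \<subseteq> B" "\<And>x. sat S UNIV id (\<lambda>_. x) \<phi> \<longleftrightarrow> x = b"
    using assms(1) by (auto simp: dcl_def)
  let ?F = "FEx 1 (FConj (rv 2 (\<lambda>_. 1) \<phi>) \<psi>)"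
  have "sat S UNIV id (\<lambda>_. x) ?F \<longleftrightarrow> x = t" for x
    using \<phi>(2) assms(3) by (simp add: sat_rv comp_def)
  moreover have "set_fm ?F \<subseteq> B" using \<phi> assms(2) by (simp add: set_rv)
  ultimately show ?thesis unfolding dcl_def by blast
qed

lemma dcl_bin:
  assumes "b1 \<in> dcl S B" "b2 \<in> dcl S B" "set_fm \<psi> = {}"
    "\<And>x. sat S UNIV id ((\<lambda>_. x)(1 := b1, 2 := b2)) \<psi> \<longleftrightarrow> x = t"
  shows "t \<in> dcl S B"
proof -
  obtain \<phi>1 where \<phi>1: "set_fm \<phi>1 \<subseteq> B" "\<And>x. sat S UNIV id (\<lambda>_. x) \<phi>1 \<longleftrightarrow> x = b1"
    using assms(1) by (auto simp: dcl_def)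
  obtain \<phi>2 where \<phi>2: "set_fm \<phi>2 \<subseteq> B" "\<And>x. sat S UNIV id (\<lambda>_. x) \<phi>2 \<longleftrightarrow> x = b2"
    using assms(2) by (auto simp: dcl_def)
  let ?F = "FEx 1 (FEx 2 (FConj (rv 3 (\<lambda>_. 1) \<phi>1) (FConj (rv 3 (\<lambda>_. 2) \<phi>2) \<psi>)))"
  have "sat S UNIV id (\<lambda>_. x) ?F \<longleftrightarrow> x = t" for x
    using \<phi>1(2) \<phi>2(2) assms(4) by (simp add: sat_rv comp_def)
  moreover have "set_fm ?F \<subseteq> B" using \<phi>1 \<phi>2 assms(3) by (simp add: set_rv)
  ultimately show ?thesis unfolding dcl_def by blast
qed

lemma dcl_base: "b \<in> B \<Longrightarrow> b \<in> dcl S B"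
  unfolding dcl_def by (rule CollectI, rule exI[of _ "FEq (TVar 0) (TCst b)"]) auto

lemma dcl_zero: "pzero S \<in> dcl S B"
  unfolding dcl_def by (rule CollectI, rule exI[of _ "FEq (TVar 0) TZero"]) auto

lemma dcl_mono: "B \<subseteq> B' \<Longrightarrow> dcl S B \<subseteq> dcl S B'"
  unfolding dcl_def by blast

lemma dcl_add: "b1 \<in> dcl S B \<Longrightarrow> b2 \<in> dcl S B \<Longrightarrow> padd S b1 b2 \<in> dcl S B"
  by (rule dcl_bin[where \<psi> = "FEq (TVar 0) (TAdd (TVar 1) (TVar 2))"]) auto

lemma dcl_subc: "b \<in> dcl S B \<Longrightarrow> psub S b (const S c) \<in> dcl S B"
  by (rule dcl_un[where \<psi> = "FEq (TVar 0) (TSub (TVar 1) (ctm c))"]) auto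

lemma dcl_addc: "b \<in> dcl S B \<Longrightarrow> padd S b (const S c) \<in> dcl S B"
  by (rule dcl_un[where \<psi> = "FEq (TVar 0) (TAdd (TVar 1) (ctm c))"]) auto

lemma dcl_zmul: "b \<in> dcl S B \<Longrightarrow> zmul S s b \<in> dcl S B"
  by (rule dcl_un[where \<psi> = "FEq (TVar 0) (ztm s (TVar 1))"]) auto



context prA begin

lemma Fdiv: "pcong S k x (const S c) \<Longrightarrow> \<exists>z. x \<ominus> const S c = nmul S k z"
proof -
  have Z: "\<forall>x::int. x mod int k = int c mod int k \<longrightarrow> (\<exists>z. x - int c = int k * z)"
    by (metis dvd_def mod_eq_dvd_iff)
  show "pcong S k x (const S c) \<Longrightarrow> \<exists>z. x \<ominus> const S c = nmul S k z"
    by (rule trJ[of "FAll 0 (FImp (FCong k X0 (ctm c)) (FEx 1 (FEq (TSub X0 (ctm c)) (ntm k X1))))"])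
       (use Z in \<open>simp\<close>, simp add: insert_Diff_if, simp add: insert_Diff_if, (simp (no_asm_use); blast?))
qed

lemma Finj: "1 \<le> k \<Longrightarrow> nmul S k x = nmul S k y \<Longrightarrow> x = y"
  by (rule trJ[of "FAll 0 (FAll 1 (FImp (FEq (ntm k X0) (ntm k X1)) (FEq X0 X1)))"])
     (simp, simp add: insert_Diff_if, simp add: insert_Diff_if, (simp (no_asm_use); blast?))

lemma Fper: "1 \<le> k \<Longrightarrow> nmul S k w = x \<ominus> const S c \<Longrightarrow> nmul S k z = a \<ominus> const S c \<Longrightarrow>
   x \<preceq> a \<oplus> d \<Longrightarrow> a \<ominus> d \<preceq> x \<Longrightarrow>
   zmul S s w \<preceq> zmul S s z \<oplus> nmul S (nat \<bar>s\<bar>) d \<and> zmul S s z \<preceq> zmul S s w \<oplus> nmul S (nat \<bar>s\<bar>) d"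
proof -
  assume k: "1 \<le> k"
  have Z: "\<forall>x a w z d::int. int k * w = x - int c \<and> int k * z = a - int c \<and> x \<le> a + d \<and> a - d \<le> x \<longrightarrow>
      s * w \<le> s * z + \<bar>s\<bar> * d \<and> s * z \<le> s * w + \<bar>s\<bar> * d"
  proof (intro allI impI)
    fix x a w z d :: int
    assume h: "int k * w = x - int c \<and> int k * z = a - int c \<and> x \<le> a + d \<and> a - d \<le> x"
    have e: "int k * (w - z) = x - a" using h by (simp add: algebra_simps)
    have "\<bar>w - z\<bar> \<le> \<bar>int k * (w - z)\<bar>" using k by (simp add: abs_mult mult_le_cancel_right1)
    also have "\<dots> \<le> d" using e h by (simp add: abs_le_iff; linarith)
    finally have wz: "\<bar>w - z\<bar> \<le> d" .
    have "\<bar>s * w - s * z\<bar> = \<bar>s\<bar> * \<bar>w - z\<bar>" by (simp add: abs_mult[symmetric] algebra_simps)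
    also have "\<dots> \<le> \<bar>s\<bar> * d" using wz by (simp add: mult_left_mono)
    finally show "s * w \<le> s * z + \<bar>s\<bar> * d \<and> s * z \<le> s * w + \<bar>s\<bar> * d" by (simp add: abs_le_iff; linarith)
  qed
  show "nmul S k w = x \<ominus> const S c \<Longrightarrow> nmul S k z = a \<ominus> const S c \<Longrightarrow>
   x \<preceq> a \<oplus> d \<Longrightarrow> a \<ominus> d \<preceq> x \<Longrightarrow> ?thesis"
    by (rule trJ[of "FAll 0 (FAll 1 (FAll 2 (FAll 3 (FAll 4 (FImp
        (FConj (FEq (ntm k X2) (TSub X0 (ctm c))) (FConj (FEq (ntm k X3) (TSub X1 (ctm c)))
           (FConj (FLe X0 (TAdd X1 X4)) (FLe (TSub X1 X4) X0))))
        (FConj (FLe (ztm s X2) (TAdd (ztm s X3) (ntm (nat \<bar>s\<bar>) X4)))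
               (FLe (ztm s X3) (TAdd (ztm s X2) (ntm (nat \<bar>s\<bar>) X4)))))))))"])
       (use Z in \<open>simp\<close>, simp add: insert_Diff_if, simp add: insert_Diff_if, (simp (no_asm_use); blast?))
qed

lemma Fquot: "1 \<le> N \<Longrightarrow> \<exists>q. nmul S N q \<preceq> x \<and> x \<prec> nmul S N q \<oplus> nmul S N o1"
proof -
  assume N: "1 \<le> N"
  have Z: "\<forall>x::int. \<exists>q. int N * q \<le> x \<and> x < int N * q + int N"
  proof
    fix x :: int
    have "int N * (x div int N) + x mod int N = x" by simp
    moreover have "0 \<le> x mod int N" "x mod int N < int N" using N by auto
    ultimately show "\<exists>q. int N * q \<le> x \<and> x < int N * q + int N" by (intro exI[of _ "x div int N"]) linarith
  qed
  show ?thesis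
    by (rule trJ[of "FAll 0 (FEx 1 (FConj (FLe (ntm N X1) X0) (FLess X0 (TAdd (ntm N X1) (ntm N TOne)))))"])
       (use Z N in \<open>simp\<close>, simp add: insert_Diff_if, simp add: insert_Diff_if, (simp (no_asm_use); blast?))
qed

lemma Fbig: "g \<prec> nmul S N q \<oplus> nmul S N o1 \<Longrightarrow> q \<prec> K \<Longrightarrow> g \<prec> nmul S N K"
proof -
  have Z: "\<forall>g q K::int. g < int N * q + int N \<and> q < K \<longrightarrow> g < int N * K"
  proof (intro allI impI)
    fix g q K :: int assume h: "g < int N * q + int N \<and> q < K"
    have "int N * (q + 1) \<le> int N * K" using h by (intro mult_left_mono) auto
    then show "g < int N * K" using h by (simp add: algebra_simps)
  qed
  show "g \<prec> nmul S N q \<oplus> nmul S N o1 \<Longrightarrow> q \<prec> K \<Longrightarrow> g \<prec> nmul S N K"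
    by (rule trJ[of "FAll 0 (FAll 1 (FAll 2 (FImp (FConj (FLess X0 (TAdd (ntm N X1) (ntm N TOne))) (FLess X1 X2))
         (FLess X0 (ntm N X2)))))"])
       (use Z in \<open>simp\<close>, simp add: insert_Diff_if, simp add: insert_Diff_if, (simp (no_asm_use); blast?))
qed

end


context prA begin

lemma irrefl: "\<not> x \<prec> x" using S3[of x x] S22[of x] by blast

lemma nmul_add: "nmul S (a + b) x = nmul S a x \<oplus> nmul S b x"
  by (induction a) (auto simp: S11 S10)

lemma nmul_mult: "nmul S (a * b) x = nmul S a (nmul S b x)"
  by (induction a) (auto simp: nmul_add)

lemma const_mult: "const S (N * k) = nmul S N (const S k)"
  by (simp add: const_def nmul_mult)

lemma const_Suc: "const S (Suc k) = o1 \<oplus> const S k" by (simp add: const_def)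
lemma const_0: "const S 0 = z0" by (simp add: const_def)

lemma stairs: "x \<preceq> y \<Longrightarrow> y \<prec> x \<oplus> const S k \<Longrightarrow> \<exists>j. y = x \<oplus> const S j"
proof (induction k)
  case 0 then show ?case using S3 by (auto simp: const_0 S1)
next
  case (Suc k)
  have "y \<preceq> x \<oplus> const S k" using Suc.prems(2) by (intro S4) (simp add: const_Suc S2)
  then show ?case using Suc by (auto simp: ple_def)
qed

lemma far_inf: assumes "\<forall>k. u \<oplus> const S k \<preceq> v" shows "infinite (icc S u v)"
proof
  assume fin: "finite (icc S u v)"
  define f where "f k = u \<oplus> const S k" for k
  have suc: "f (Suc k) = f k \<oplus> o1" for k by (simp add: f_def const_Suc S2)
  have strict: "j < k \<Longrightarrow> f j \<prec> f k" for j k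
  proof (induction k)
    case 0 then show ?case by simp
  next
    case (Suc k)
    show ?case
    proof (cases "j = k")
      case True then show ?thesis by (simp add: suc S6)
    next
      case False then have "f j \<prec> f k" using Suc by simp
      then show ?thesis using S6 S7 suc by metis
    qed
  qed
  have "inj f"
  proof (rule injI)
    fix j k assume "f j = f k"
    then show "j = k" using strict irrefl by (metis linorder_neqE_nat)
  qed
  moreover have "range f \<subseteq> icc S u v"
  proof
    fix y assume "y \<in> range f"
    then obtain k where k: "y = f k" by auto
    have "u \<preceq> f k"
    proof (cases k)
      case 0 then show ?thesis by (simp add: f_def const_0 S1 S22)
    next
      case (Suc k') then have "f 0 \<prec> f k" using strict by simp
      then show ?thesis by (simp add: f_def const_0 S1 S21)
    qed
    then show "y \<in> icc S u v" using assms k by (simp add: icc_def f_def)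
  qed
  ultimately have "finite (UNIV :: nat set)" using fin by (meson finite_imageD finite_subset inj_on_subset subset_UNIV)
  then show False by simp
qed

lemma dcl_cancel: "b \<in> dcl S B \<Longrightarrow> t \<oplus> const S j = b \<Longrightarrow> t \<in> dcl S B"
  by (rule dcl_un[where \<psi> = "FEq (TAdd (TVar 0) (ctm j)) (TVar 1)"]) (auto intro: S9)

lemma dcl_div: "1 \<le> k \<Longrightarrow> b \<in> dcl S B \<Longrightarrow> nmul S k w = b \<Longrightarrow> w \<in> dcl S B"
  by (rule dcl_un[where \<psi> = "FEq (ntm k (TVar 0)) (TVar 1)"]) (auto intro: Finj)

lemma gen_far1: "b \<in> dcl S E \<Longrightarrow> t \<notin> dcl S E \<Longrightarrow> b \<preceq> t \<Longrightarrow> \<forall>k. b \<oplus> const S k \<preceq> t"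
proof (rule ccontr)
  assume h: "b \<in> dcl S E" "t \<notin> dcl S E" "b \<preceq> t" "\<not> (\<forall>k. b \<oplus> const S k \<preceq> t)"
  then obtain k where "\<not> b \<oplus> const S k \<preceq> t" by blast
  then have "t \<prec> b \<oplus> const S k" using S8 by blast
  then obtain j where "t = b \<oplus> const S j" using stairs h(3) by blast
  then show False using h(1,2) dcl_addc by metis
qed

lemma gen_far2: "b \<in> dcl S E \<Longrightarrow> t \<notin> dcl S E \<Longrightarrow> t \<preceq> b \<Longrightarrow> \<forall>k. t \<oplus> const S k \<preceq> b"
proof (rule ccontr)
  assume h: "b \<in> dcl S E" "t \<notin> dcl S E" "t \<preceq> b" "\<not> (\<forall>k. t \<oplus> const S k \<preceq> b)"
  then obtain k where "\<not> t \<oplus> const S k \<preceq> b" by blast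
  then have "b \<prec> t \<oplus> const S k" using S8 by blast
  then obtain j where "b = t \<oplus> const S j" using stairs h(3) by blast
  then show False using h(1,2) dcl_cancel by metis
qed

lemma divk_eq: "1 \<le> k \<Longrightarrow> nmul S k w = y \<Longrightarrow> divk S k y = w"
  unfolding divk_def by (rule the_equality) (auto intro: Finj)

lemma foldr_bound: "(\<forall>i\<in>set l. f i \<preceq> g i \<oplus> e i) \<Longrightarrow>
  foldr (padd S) (map f l) \<gamma> \<preceq> foldr (padd S) (map g l) \<gamma> \<oplus> foldr (padd S) (map e l) z0"
  by (induction l) (auto simp: S1 S22 intro: S17)

lemma foldr_nmul: "foldr (padd S) (map (\<lambda>i. nmul S (h i) d) l) z0 = nmul S (sum_list (map h l)) d"
  by (induction l) (auto simp: nmul_add)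

lemma foldr_dcl: "(\<forall>i\<in>set l. f i \<in> dcl S B) \<Longrightarrow> \<gamma> \<in> dcl S B \<Longrightarrow> foldr (padd S) (map f l) \<gamma> \<in> dcl S B"
  by (induction l) (auto intro: dcl_add)

definition big where "big x \<longleftrightarrow> (\<forall>k. const S k \<preceq> x)"

lemma choose_d: assumes "1 \<le> N" "big g1" "big g2"
  shows "\<exists>d. big d \<and> nmul S N d \<preceq> g1 \<and> nmul S N d \<preceq> g2"
proof -
  define g where "g = (if g1 \<preceq> g2 then g1 else g2)"
  have g12: "g \<preceq> g1" "g \<preceq> g2" using S8[of g1 g2] by (auto simp: g_def S22 S21)
  have bg: "big g" using assms by (simp add: g_def)
  obtain q where q: "nmul S N q \<preceq> g" "g \<prec> nmul S N q \<oplus> nmul S N o1" using Fquot[OF assms(1)] by blast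
  have "big q" unfolding big_def
  proof
    fix k show "const S k \<preceq> q"
    proof (rule ccontr)
      assume "\<not> const S k \<preceq> q"
      then have "q \<prec> const S k" using S8 by blast
      then have "g \<prec> nmul S N (const S k)" using Fbig q(2) by blast
      then have "g \<prec> const S (N * k)" by (simp add: const_mult)
      then show False using bg S3 unfolding big_def by blast
    qed
  qed
  then show ?thesis using q(1) g12 S5 by blast
qed

end



lemma cell_len: "cell S B ty C \<Longrightarrow> x \<in> C \<Longrightarrow> length x = length ty"
  by (induction arbitrary: x rule: cell.induct) auto

lemma cell_sum: "cell S B ty C \<Longrightarrow> sum_list ty \<le> length ty"
  by (induction rule: cell.induct) auto

lemma dimo_indep: assumes "dimo S M0 a = length a" shows "indep S M0 a {..<length a}"
proof -
  define F where "F = {card I | I. I \<subseteq> {..<length a} \<and> indep S M0 a I}"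
  have "F = (\<lambda>I. card I) ` {I. I \<subseteq> {..<length a} \<and> indep S M0 a I}" unfolding F_def by blast
  then have fin: "finite F" by simp
  have "0 \<in> F" unfolding F_def indep_def by (rule CollectI, rule exI[of _ "{}"]) auto
  then have "Max F \<in> F" using fin by (intro Max_in) auto
  then obtain I where I: "card I = length a" "I \<subseteq> {..<length a}" "indep S M0 a I"
    using assms unfolding F_def dimo_def by auto
  then have "I = {..<length a}" by (intro card_subset_eq) auto
  then show ?thesis using I by simp
qed

context prA begin

lemma S23: "x \<oplus> y = y \<oplus> x"
  by (rule trJ[of "FAll 0 (FAll 1 (FEq (TAdd X0 X1) (TAdd X1 X0)))"], (simp; presburger?), simp add: insert_Diff_if, simp add: insert_Diff_if, (simp (no_asm_use); blast?))

lemma nmul_nonneg: "z0 \<preceq> d \<Longrightarrow> z0 \<preceq> nmul S j d"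
proof (induction j)
  case 0 then show ?case by (simp add: S22)
next
  case (Suc j)
  have "nmul S j d \<preceq> nmul S j d \<oplus> d" using S16 Suc.prems by blast
  then show ?case using Suc S5 S23 by (metis nmul.simps(2))
qed

lemma blin_dcl:
  assumes "blin S M0 C f" "a' \<in> C" "dcl S M0 \<subseteq> dcl S E" "\<forall>i<length a'. a' ! i \<in> dcl S E"
  shows "f a' \<in> dcl S E"
proof -
  obtain s k c \<gamma> where b: "\<gamma> \<in> dcl S M0" "\<forall>i. c i < k i"
    "\<forall>x\<in>C. \<forall>i<length x. pcong S (k i) (x ! i) (const S (c i))"
    "\<forall>x\<in>C. f x = foldr (padd S)
        (map (\<lambda>i. zmul S (s i) (divk S (k i) (psub S (x ! i) (const S (c i))))) [0..<length x]) \<gamma>"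
    using assms(1) unfolding blin_def by blast
  have "\<forall>i\<in>set [0..<length a']. zmul S (s i) (divk S (k i) (psub S (a' ! i) (const S (c i)))) \<in> dcl S E"
  proof
    fix i assume "i \<in> set [0..<length a']"
    then have i: "i < length a'" by simp
    obtain w where w: "a' ! i \<ominus> const S (c i) = nmul S (k i) w" using Fdiv b(3) assms(2) i by blast
    have k: "1 \<le> k i" using b(2)[rule_format, of i] by simp
    have "divk S (k i) (a' ! i \<ominus> const S (c i)) = w" using divk_eq[OF k w[symmetric]] .
    moreover have "w \<in> dcl S E" using dcl_div[OF k dcl_subc[OF assms(4)[rule_format, OF i]] w[symmetric]] .
    ultimately show "zmul S (s i) (divk S (k i) (psub S (a' ! i) (const S (c i)))) \<in> dcl S E"
      using dcl_zmul by simp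
  qed
  moreover have "\<gamma> \<in> dcl S E" using b(1) assms(3) by blast
  ultimately have "foldr (padd S) (map (\<lambda>i. zmul S (s i) (divk S (k i) (psub S (a' ! i) (const S (c i))))) [0..<length a']) \<gamma> \<in> dcl S E"
    by (rule foldr_dcl)
  then show ?thesis using b(4) assms(2) by simp
qed

lemma blin_bound:
  assumes "blin S M0 C f" "a' \<in> C" "\<forall>x\<in>C. length x = m"
  shows "\<exists>L. \<forall>d x. x \<in> C \<longrightarrow> (\<forall>i<m. a' ! i \<ominus> d \<preceq> x ! i \<and> x ! i \<preceq> a' ! i \<oplus> d) \<longrightarrow>
      f x \<preceq> f a' \<oplus> nmul S L d \<and> f a' \<preceq> f x \<oplus> nmul S L d"
proof -
  obtain s k c \<gamma> where b: "\<forall>i. c i < k i"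
    "\<forall>x\<in>C. \<forall>i<length x. pcong S (k i) (x ! i) (const S (c i))"
    "\<forall>x\<in>C. f x = foldr (padd S)
        (map (\<lambda>i. zmul S (s i) (divk S (k i) (psub S (x ! i) (const S (c i))))) [0..<length x]) \<gamma>"
    using assms(1) unfolding blin_def by blast
  define F where "F x i = zmul S (s i) (divk S (k i) (psub S (x ! i) (const S (c i))))" for x i
  define L where "L = sum_list (map (\<lambda>i. nat \<bar>s i\<bar>) [0..<m])"
  have la: "length a' = m" using assms by blast
  show ?thesis
  proof (intro exI allI impI)
    fix d x assume x: "x \<in> C" and bd: "\<forall>i<m. a' ! i \<ominus> d \<preceq> x ! i \<and> x ! i \<preceq> a' ! i \<oplus> d"
    have lx: "length x = m" using assms x by blast
    define e where "e i = nmul S (nat \<bar>s i\<bar>) d" for i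
    have per: "F x i \<preceq> F a' i \<oplus> e i \<and> F a' i \<preceq> F x i \<oplus> e i" if i: "i < m" for i
    proof -
      have k: "1 \<le> k i" using b(1)[rule_format, of i] by simp
      have c1: "pcong S (k i) (x ! i) (const S (c i))" using b(2) x i lx by simp
      have c2: "pcong S (k i) (a' ! i) (const S (c i))" using b(2) assms(2) i la by simp
      obtain w where w: "x ! i \<ominus> const S (c i) = nmul S (k i) w" using Fdiv[OF c1] by blast
      obtain z where z: "a' ! i \<ominus> const S (c i) = nmul S (k i) z" using Fdiv[OF c2] by blast
      have Fx: "F x i = zmul S (s i) w" unfolding F_def using divk_eq[OF k w[symmetric]] by simp
      have Fa: "F a' i = zmul S (s i) z" unfolding F_def using divk_eq[OF k z[symmetric]] by simp
      have h1: "x ! i \<preceq> a' ! i \<oplus> d" and h2: "a' ! i \<ominus> d \<preceq> x ! i" using bd i by auto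
      show ?thesis unfolding e_def Fx Fa using Fper[OF k w[symmetric] z[symmetric] h1 h2] .
    qed
    have fx: "f x = foldr (padd S) (map (F x) [0..<m]) \<gamma>" using b(3) x lx unfolding F_def by simp
    have fa: "f a' = foldr (padd S) (map (F a') [0..<m]) \<gamma>" using b(3) assms(2) la unfolding F_def by simp
    have E: "foldr (padd S) (map e [0..<m]) z0 = nmul S L d"
      unfolding e_def L_def using foldr_nmul[of "\<lambda>i. nat \<bar>s i\<bar>" d "[0..<m]"] by simp
    have 1: "f x \<preceq> f a' \<oplus> nmul S L d"
      using foldr_bound[of "[0..<m]" "F x" "F a'" e \<gamma>] per fx fa E by simp
    have 2: "f a' \<preceq> f x \<oplus> nmul S L d"
      using foldr_bound[of "[0..<m]" "F a'" "F x" e \<gamma>] per fx fa E by simp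
    show "f x \<preceq> f a' \<oplus> nmul S L d \<and> f a' \<preceq> f x \<oplus> nmul S L d" using 1 2 by blast
  qed
qed

end


context prA begin

lemma lo_inf: "b \<in> dcl S E \<Longrightarrow> t \<notin> dcl S E \<Longrightarrow> b \<preceq> t \<Longrightarrow> infinite (icc S b t)"
  using gen_far1 far_inf by blast
lemma hi_inf: "b \<in> dcl S E \<Longrightarrow> t \<notin> dcl S E \<Longrightarrow> t \<preceq> b \<Longrightarrow> infinite (icc S t b)"
  using gen_far2 far_inf by blast

lemma cint_step:
  assumes cellC: "cell S M0 ty C"
    and IH: "\<And>a. a \<in> C \<Longrightarrow> indep S M0 a {..<length ty} \<Longrightarrow> \<exists>X. box S (length ty) a X \<and> X \<subseteq> C"
    and hlo: "\<forall>\<alpha>. lo = Some \<alpha> \<longrightarrow> blin S M0 C \<alpha>" and hhi: "\<forall>\<beta>. hi = Some \<beta> \<longrightarrow> blin S M0 C \<beta>"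
    and Dd: "D = {y. \<exists>x\<in>C. \<exists>t. y = x @ [t] \<and> lowok S (map_option (\<lambda>a. a x) lo) t \<and>
                 upok S (map_option (\<lambda>b. b x) hi) t \<and> pcong S N t (const S c)}"
    and cN: "c < N" and aD: "a \<in> D" and ind: "indep S M0 a {..<Suc (length ty)}"
  shows "\<exists>X. box S (Suc (length ty)) a X \<and> X \<subseteq> D"
proof -
  define m where "m = length ty"
  obtain a' t where a: "a = a' @ [t]" and a'C: "a' \<in> C"
    and tlo: "lowok S (map_option (\<lambda>f. f a') lo) t" and thi: "upok S (map_option (\<lambda>f. f a') hi) t"
    and tc: "pcong S N t (const S c)"
    using aD Dd by blast
  have lenC: "\<forall>x\<in>C. length x = m" using cell_len[OF cellC] m_def by blast
  have la: "length a' = m" using lenC a'C by blast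
  have ai: "a ! i = a' ! i" if "i < m" for i using that la a by (simp add: nth_append)
  have am: "a ! m = t" using la a by (simp add: nth_append)
  have ind': "indep S M0 a' {..<m}"
    unfolding indep_def
  proof
    fix i assume i: "i \<in> {..<m}"
    have sub: "M0 \<union> (\<lambda>j. a' ! j) ` ({..<m} - {i}) \<subseteq> M0 \<union> (\<lambda>j. a ! j) ` ({..<Suc m} - {i})"
    proof
      fix y assume "y \<in> M0 \<union> (\<lambda>j. a' ! j) ` ({..<m} - {i})"
      then show "y \<in> M0 \<union> (\<lambda>j. a ! j) ` ({..<Suc m} - {i})"
      proof
        assume "y \<in> (\<lambda>j. a' ! j) ` ({..<m} - {i})"
        then obtain j where j: "j < m" "j \<noteq> i" "y = a' ! j" by auto
        then have "y = a ! j" using ai by simp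
        then show ?thesis using j by auto
      qed simp
    qed
    have "a ! i \<notin> dcl S (M0 \<union> (\<lambda>j. a ! j) ` ({..<Suc m} - {i}))"
      using ind i unfolding indep_def m_def by auto
    then show "a' ! i \<notin> dcl S (M0 \<union> (\<lambda>j. a' ! j) ` ({..<m} - {i}))"
      using dcl_mono[OF sub] ai i by auto
  qed
  define E where "E = M0 \<union> (\<lambda>j. a ! j) ` ({..<Suc m} - {m})"
  have tE: "t \<notin> dcl S E" using ind am unfolding indep_def E_def m_def by auto
  have M0E: "dcl S M0 \<subseteq> dcl S E" by (rule dcl_mono) (auto simp: E_def)
  have aE: "\<forall>i<length a'. a' ! i \<in> dcl S E"
  proof (intro allI impI)
    fix i assume "i < length a'"
    then have "i < m" using la by simp
    then have "a' ! i = a ! i" "i \<in> {..<Suc m} - {m}" using ai[of i] by auto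
    then have "a' ! i \<in> E" unfolding E_def by (metis UnI2 image_eqI)
    then show "a' ! i \<in> dcl S E" by (rule dcl_base)
  qed
  obtain X' where bX': "box S m a' X'" and X'C: "X' \<subseteq> C" using IH[OF a'C] ind' m_def by blast
  obtain lo' hi' N' c' where cN': "\<forall>i<m. c' i < N' i"
    and X'd: "X' = {x. length x = m \<and> (\<forall>i<m. x ! i \<in> bset S (lo' i) (hi' i) (N' i) (c' i))}"
    and ab: "\<forall>i<m. a' ! i \<in> bset S (lo' i) (hi' i) (N' i) (c' i) \<and>
         (\<forall>e. lo' i = Some e \<longrightarrow> infinite (icc S e (a' ! i))) \<and>
         (\<forall>e. hi' i = Some e \<longrightarrow> infinite (icc S (a' ! i) e))"
    using bX' unfolding box_def by blast
  define near where "near d x \<longleftrightarrow> (\<forall>i<m. a' ! i \<ominus> d \<preceq> x ! i \<and> x ! i \<preceq> a' ! i \<oplus> d)" for d x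
  have "\<exists>La. \<forall>\<alpha>. lo = Some \<alpha> \<longrightarrow> (\<forall>d x. x \<in> C \<longrightarrow> near d x \<longrightarrow>
      \<alpha> x \<preceq> \<alpha> a' \<oplus> nmul S La d \<and> \<alpha> a' \<preceq> \<alpha> x \<oplus> nmul S La d)"
  proof (cases lo)
    case None then show ?thesis by simp
  next
    case (Some \<alpha>)
    then show ?thesis using blin_bound[OF hlo[rule_format, OF Some] a'C lenC] unfolding near_def by auto
  qed
  then obtain La where La: "\<And>\<alpha> d x. lo = Some \<alpha> \<Longrightarrow> x \<in> C \<Longrightarrow> near d x \<Longrightarrow>
      \<alpha> x \<preceq> \<alpha> a' \<oplus> nmul S La d \<and> \<alpha> a' \<preceq> \<alpha> x \<oplus> nmul S La d" by blast
  have "\<exists>Lb. \<forall>\<beta>. hi = Some \<beta> \<longrightarrow> (\<forall>d x. x \<in> C \<longrightarrow> near d x \<longrightarrow>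
      \<beta> x \<preceq> \<beta> a' \<oplus> nmul S Lb d \<and> \<beta> a' \<preceq> \<beta> x \<oplus> nmul S Lb d)"
  proof (cases hi)
    case None then show ?thesis by simp
  next
    case (Some \<beta>)
    then show ?thesis using blin_bound[OF hhi[rule_format, OF Some] a'C lenC] unfolding near_def by auto
  qed
  then obtain Lb where Lb: "\<And>\<beta> d x. hi = Some \<beta> \<Longrightarrow> x \<in> C \<Longrightarrow> near d x \<Longrightarrow>
      \<beta> x \<preceq> \<beta> a' \<oplus> nmul S Lb d \<and> \<beta> a' \<preceq> \<beta> x \<oplus> nmul S Lb d" by blast
  obtain G where G: "big G"
  proof -
    have z: "z0 \<in> dcl S E" by (rule dcl_zero)
    show ?thesis
    proof (cases "z0 \<preceq> t")
      case True
      then have "\<forall>k. z0 \<oplus> const S k \<preceq> t" using gen_far1[OF z tE] by blast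
      then have "big (t \<ominus> z0)" unfolding big_def using S12 by blast
      then show ?thesis by (rule that)
    next
      case False
      then have "t \<preceq> z0" using S8 S21 by blast
      then have "\<forall>k. t \<oplus> const S k \<preceq> z0" using gen_far2[OF z tE] by blast
      then have "big (z0 \<ominus> t)" unfolding big_def using S12 by blast
      then show ?thesis by (rule that)
    qed
  qed
  define g1 where "g1 = (case lo of None \<Rightarrow> G | Some \<alpha> \<Rightarrow> t \<ominus> \<alpha> a')"
  define g2 where "g2 = (case hi of None \<Rightarrow> G | Some \<beta> \<Rightarrow> \<beta> a' \<ominus> t)"
  have bg1: "big g1"
  proof (cases lo)
    case None then show ?thesis using G by (simp add: g1_def)
  next
    case (Some \<alpha>)
    have p: "\<alpha> a' \<in> dcl S E" using blin_dcl[OF hlo[rule_format, OF Some] a'C M0E aE] .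
    have "\<alpha> a' \<preceq> t" using tlo Some by (simp add: lowok_def)
    then have "\<forall>k. \<alpha> a' \<oplus> const S k \<preceq> t" using gen_far1[OF p tE] by blast
    then show ?thesis unfolding big_def g1_def using Some S12 by simp
  qed
  have bg2: "big g2"
  proof (cases hi)
    case None then show ?thesis using G by (simp add: g2_def)
  next
    case (Some \<beta>)
    have p: "\<beta> a' \<in> dcl S E" using blin_dcl[OF hhi[rule_format, OF Some] a'C M0E aE] .
    have "t \<preceq> \<beta> a'" using thi Some by (simp add: upok_def)
    then have "\<forall>k. t \<oplus> const S k \<preceq> \<beta> a'" using gen_far2[OF p tE] by blast
    then show ?thesis unfolding big_def g2_def using Some S12 by simp
  qed
  obtain d where bd: "big d" and d1: "nmul S (Suc (La + Lb)) d \<preceq> g1" and d2: "nmul S (Suc (La + Lb)) d \<preceq> g2"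
    using choose_d[OF _ bg1 bg2, of "Suc (La + Lb)"] by auto
  have dk: "const S k \<preceq> d" for k using bd unfolding big_def by blast
  have d0: "z0 \<preceq> d" using dk[of 0] by (simp add: const_0)
  have boundA: "d \<oplus> nmul S La d \<preceq> t \<ominus> \<alpha> a'" if "lo = Some \<alpha>" for \<alpha>
  proof -
    have "nmul S (Suc (La + Lb)) d = nmul S (Suc La) d \<oplus> nmul S Lb d" using nmul_add[of "Suc La" Lb d] by simp
    moreover have "nmul S (Suc La) d \<preceq> nmul S (Suc La) d \<oplus> nmul S Lb d" using S16 nmul_nonneg[OF d0] by blast
    ultimately have "nmul S (Suc La) d \<preceq> g1" using d1 S5 by metis
    then show ?thesis using that by (simp add: g1_def)
  qed
  have boundB: "d \<oplus> nmul S Lb d \<preceq> \<beta> a' \<ominus> t" if "hi = Some \<beta>" for \<beta>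
  proof -
    have "nmul S (Suc (La + Lb)) d = nmul S (Suc Lb) d \<oplus> nmul S La d" using nmul_add[of "Suc Lb" La d] by (simp add: add.commute)
    moreover have "nmul S (Suc Lb) d \<preceq> nmul S (Suc Lb) d \<oplus> nmul S La d" using S16 nmul_nonneg[OF d0] by blast
    ultimately have "nmul S (Suc Lb) d \<preceq> g2" using d2 S5 by metis
    then show ?thesis using that by (simp add: g2_def)
  qed
  define mx where "mx e z = (if e \<preceq> z then z else e)" for e z
  define mn where "mn e z = (if z \<preceq> e then z else e)" for e z
  have mx1: "e \<preceq> mx e z" "z \<preceq> mx e z" for e z using S8[of e z] by (auto simp: mx_def S22 S21)
  have mn1: "mn e z \<preceq> e" "mn e z \<preceq> z" for e z using S8[of z e] by (auto simp: mn_def S22 S21)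
  define lo2 where "lo2 i = (if i < m then Some (case lo' i of None \<Rightarrow> a' ! i \<ominus> d | Some e \<Rightarrow> mx e (a' ! i \<ominus> d))
      else Some (t \<ominus> d))" for i
  define hi2 where "hi2 i = (if i < m then Some (case hi' i of None \<Rightarrow> a' ! i \<oplus> d | Some e \<Rightarrow> mn e (a' ! i \<oplus> d))
      else Some (t \<oplus> d))" for i
  define N2 where "N2 i = (if i < m then N' i else N)" for i
  define c2 where "c2 i = (if i < m then c' i else c)" for i
  define X2 where "X2 = {x. length x = Suc m \<and> (\<forall>i<Suc m. x ! i \<in> bset S (lo2 i) (hi2 i) (N2 i) (c2 i))}"
  have key: "y \<in> bset S (lo' i) (hi' i) (N' i) (c' i) \<and> a' ! i \<ominus> d \<preceq> y \<and> y \<preceq> a' ! i \<oplus> d"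
    if i: "i < m" and y: "y \<in> bset S (lo2 i) (hi2 i) (N2 i) (c2 i)" for i y
  proof -
    have l: "lowok S (lo' i) y \<and> a' ! i \<ominus> d \<preceq> y"
    proof (cases "lo' i")
      case None then show ?thesis using y i by (simp add: bset_def lo2_def lowok_def)
    next
      case (Some e)
      then have "mx e (a' ! i \<ominus> d) \<preceq> y" using y i by (simp add: bset_def lo2_def lowok_def)
      then show ?thesis using Some mx1 S5 by (metis lowok_def option.simps(5))
    qed
    have h: "upok S (hi' i) y \<and> y \<preceq> a' ! i \<oplus> d"
    proof (cases "hi' i")
      case None then show ?thesis using y i by (simp add: bset_def hi2_def upok_def)
    next
      case (Some e)
      then have "y \<preceq> mn e (a' ! i \<oplus> d)" using y i by (simp add: bset_def hi2_def upok_def)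
      then show ?thesis using Some mn1 S5 by (metis upok_def option.simps(5))
    qed
    have "pcong S (N' i) y (const S (c' i))" using y i by (simp add: bset_def N2_def c2_def)
    then show ?thesis using l h by (simp add: bset_def)
  qed
  have farlo: "\<forall>k. (x \<ominus> d) \<oplus> const S k \<preceq> x" for x using S14 dk by blast
  have farhi: "\<forall>k. x \<oplus> const S k \<preceq> x \<oplus> d" for x using S15 dk by blast
  have P: "\<forall>i<Suc m. a ! i \<in> bset S (lo2 i) (hi2 i) (N2 i) (c2 i) \<and>
         (\<forall>e. lo2 i = Some e \<longrightarrow> infinite (icc S e (a ! i))) \<and>
         (\<forall>e. hi2 i = Some e \<longrightarrow> infinite (icc S (a ! i) e))"
  proof (intro allI impI)
    fix i assume i: "i < Suc m"
    show "a ! i \<in> bset S (lo2 i) (hi2 i) (N2 i) (c2 i) \<and>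
         (\<forall>e. lo2 i = Some e \<longrightarrow> infinite (icc S e (a ! i))) \<and>
         (\<forall>e. hi2 i = Some e \<longrightarrow> infinite (icc S (a ! i) e))"
    proof (cases "i < m")
      case True
      have ab': "a' ! i \<in> bset S (lo' i) (hi' i) (N' i) (c' i)"
        and il: "\<forall>e. lo' i = Some e \<longrightarrow> infinite (icc S e (a' ! i))"
        and ih: "\<forall>e. hi' i = Some e \<longrightarrow> infinite (icc S (a' ! i) e)" using ab True by auto
      have s16: "a' ! i \<ominus> d \<preceq> a' ! i" "a' ! i \<preceq> a' ! i \<oplus> d" using S16[OF d0] by auto
      have L: "lowok S (lo2 i) (a' ! i) \<and> (\<forall>e. lo2 i = Some e \<longrightarrow> infinite (icc S e (a' ! i)))"
      proof (cases "lo' i")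
        case None then show ?thesis using True s16 far_inf[OF farlo] by (simp add: lo2_def lowok_def)
      next
        case (Some e)
        have "e \<preceq> a' ! i" "infinite (icc S e (a' ! i))" using ab' il Some by (auto simp: bset_def lowok_def)
        then show ?thesis using True Some s16 far_inf[OF farlo] by (simp add: lo2_def lowok_def mx_def)
      qed
      have H: "upok S (hi2 i) (a' ! i) \<and> (\<forall>e. hi2 i = Some e \<longrightarrow> infinite (icc S (a' ! i) e))"
      proof (cases "hi' i")
        case None then show ?thesis using True s16 far_inf[OF farhi] by (simp add: hi2_def upok_def)
      next
        case (Some e)
        have "a' ! i \<preceq> e" "infinite (icc S (a' ! i) e)" using ab' ih Some by (auto simp: bset_def upok_def)
        then show ?thesis using True Some s16 far_inf[OF farhi] by (simp add: hi2_def upok_def mn_def)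
      qed
      have "pcong S (N2 i) (a' ! i) (const S (c2 i))" using ab' True by (simp add: bset_def N2_def c2_def)
      then show ?thesis using L H ai[OF True] by (simp add: bset_def)
    next
      case False
      then have im: "i = m" using i by simp
      have s16: "t \<ominus> d \<preceq> t" "t \<preceq> t \<oplus> d" using S16[OF d0] by auto
      show ?thesis using im am s16 tc far_inf[OF farlo] far_inf[OF farhi]
        by (simp add: bset_def lo2_def hi2_def N2_def c2_def lowok_def upok_def)
    qed
  qed
  have bx: "box S (Suc m) a X2"
    unfolding box_def
    apply (rule conjI)
     apply (simp add: a la)
    apply (rule exI[of _ lo2], rule exI[of _ hi2], rule exI[of _ N2], rule exI[of _ c2])
    using P cN' cN by (simp add: X2_def N2_def c2_def)
  have sub: "X2 \<subseteq> D"
  proof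
    fix x assume x: "x \<in> X2"
    then have lx: "length x = Suc m" and xb: "\<forall>i<Suc m. x ! i \<in> bset S (lo2 i) (hi2 i) (N2 i) (c2 i)"
      by (auto simp: X2_def)
    define x' where "x' = take m x"
    define t' where "t' = x ! m"
    have xe: "x = x' @ [t']" unfolding x'_def t'_def using lx by (metis lessI take_Suc_conv_app_nth take_all order_refl)
    have lx': "length x' = m" using lx by (simp add: x'_def)
    have xi: "x' ! i = x ! i" if "i < m" for i using that by (simp add: x'_def)
    have kk: "x' ! i \<in> bset S (lo' i) (hi' i) (N' i) (c' i) \<and> a' ! i \<ominus> d \<preceq> x' ! i \<and> x' ! i \<preceq> a' ! i \<oplus> d"
      if "i < m" for i using key[OF that, of "x ! i"] xb that xi[OF that] by simp
    have x'C: "x' \<in> C" using X'C X'd kk lx' by blast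
    have nr: "near d x'" unfolding near_def using kk by blast
    have tb: "t' \<in> bset S (Some (t \<ominus> d)) (Some (t \<oplus> d)) N c" using xb[rule_format, of m]
      by (simp add: t'_def lo2_def hi2_def N2_def c2_def)
    then have t1: "t \<ominus> d \<preceq> t'" and t2: "t' \<preceq> t \<oplus> d" and t3: "pcong S N t' (const S c)"
      by (auto simp: bset_def lowok_def upok_def)
    have lw: "lowok S (map_option (\<lambda>f. f x') lo) t'"
    proof (cases lo)
      case None then show ?thesis by (simp add: lowok_def)
    next
      case (Some \<alpha>)
      have "\<alpha> x' \<preceq> \<alpha> a' \<oplus> nmul S La d" using La[OF Some x'C nr] by blast
      then have "\<alpha> x' \<preceq> t'" using S19[OF boundA[OF Some] _ t1] by blast
      then show ?thesis using Some by (simp add: lowok_def)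
    qed
    have up: "upok S (map_option (\<lambda>f. f x') hi) t'"
    proof (cases hi)
      case None then show ?thesis by (simp add: upok_def)
    next
      case (Some \<beta>)
      have "\<beta> a' \<preceq> \<beta> x' \<oplus> nmul S Lb d" using Lb[OF Some x'C nr] by blast
      then have "t' \<preceq> \<beta> x'" using S20[OF _ boundB[OF Some] t2] by blast
      then show ?thesis using Some by (simp add: upok_def)
    qed
    show "x \<in> D" using Dd xe x'C lw up t3 by blast
  qed
  show ?thesis using bx sub m_def by blast
qed

lemma main:
  "cell S M0 ty C \<Longrightarrow> sum_list ty = length ty \<Longrightarrow> a \<in> C \<Longrightarrow> indep S M0 a {..<length ty} \<Longrightarrow>
   \<exists>X. box S (length ty) a X \<and> X \<subseteq> C"
proof (induction arbitrary: a rule: cell.induct)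
  case (c0 g)
  then show ?case by simp
next
  case (c1 lo hi c N X)
  obtain t0 where a: "a = [t0]" and t0: "t0 \<in> X" using c1.prems(2) by blast
  have e: "{..<Suc 0} - {0} = {}" by auto
  have nd: "t0 \<notin> dcl S M0" using c1.prems(3) a unfolding indep_def by (simp add: e)
  define Xb where "Xb = {x. length x = 1 \<and> (\<forall>i<1. x ! i \<in> bset S lo hi N c)}"
  have tb: "t0 \<in> bset S lo hi N c" using t0 c1.hyps(4) by (simp add: bset_def)
  have P: "\<forall>i<1. a ! i \<in> bset S lo hi N c \<and> (\<forall>aa. lo = Some aa \<longrightarrow> infinite (icc S aa (a ! i))) \<and>
        (\<forall>b. hi = Some b \<longrightarrow> infinite (icc S (a ! i) b))"
  proof (intro allI impI conjI)
    fix i :: nat assume "i < 1"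
    then have ai: "a ! i = t0" using a by simp
    show "a ! i \<in> bset S lo hi N c" using ai tb by simp
    show "infinite (icc S al (a ! i))" if "lo = Some al" for al
      using lo_inf[of al M0 t0] c1.hyps(1) that nd tb ai by (simp add: bset_def lowok_def)
    show "infinite (icc S (a ! i) b)" if "hi = Some b" for b
      using hi_inf[of b M0 t0] c1.hyps(2) that nd tb ai by (simp add: bset_def upok_def)
  qed
  have "box S 1 a Xb"
    unfolding box_def
    apply (rule conjI)
     apply (simp add: a)
    apply (rule exI[of _ "\<lambda>_. lo"], rule exI[of _ "\<lambda>_. hi"], rule exI[of _ "\<lambda>_. N"], rule exI[of _ "\<lambda>_. c"])
    using P c1.hyps(3) by (simp add: Xb_def)
  moreover have "Xb \<subseteq> (\<lambda>t. [t]) ` X"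
  proof
    fix x assume "x \<in> Xb"
    then have "length x = 1" "x ! 0 \<in> bset S lo hi N c" by (auto simp: Xb_def)
    then have "x = [x ! 0]" "x ! 0 \<in> X" using c1.hyps(4)
      by (auto simp: bset_def intro: nth_equalityI)
    then show "x \<in> (\<lambda>t. [t]) ` X" by (metis imageI)
  qed
  ultimately show ?case by auto
next
  case (cgraph ty C f)
  then show ?case using cell_sum[OF cgraph.hyps(1)] by simp
next
  case (cint ty C lo hi c N D)
  have sm: "sum_list ty = length ty" using cint.prems(1) cell_sum[OF cint.hyps(1)] by simp
  have e: "length (ty @ [1]) = Suc (length ty)" by simp
  have ind: "indep S M0 a {..<Suc (length ty)}" using cint.prems(3) unfolding e .
  have "\<exists>X. box S (Suc (length ty)) a X \<and> X \<subseteq> D"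
    by (rule cint_step[OF cint.hyps(1) cint.IH[OF sm] cint.hyps(2,3,5,4) cint.prems(2) ind])
  moreover have "length (ty @ [1]) = Suc (length ty)" by simp
  ultimately show ?case by metis
qed

end

theorem lemma3p4:
  fixes S :: "'a pstr" and M0 :: "'a set" and C :: "'a list set"
    and ty :: "nat list" and a :: "'a list" and n :: nat
  assumes "models_PrA S" and "saturated S"
    and "elem_sub S M0" and "small M0"
    and "cell S M0 ty C" and "length ty = n" and "sum_list ty = n"
    and "a \<in> C" and "dimo S M0 a = n"
  shows "\<exists>X. box S n a X \<and> X \<subseteq> C"
proof -
  interpret prA S using assms(1) by unfold_locales
  have la: "length a = n" using cell_len[OF assms(5,8)] assms(6) by simp
  have "indep S M0 a {..<length a}" using dimo_indep[of S M0 a] assms(9) la by simp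
  moreover have "sum_list ty = length ty" using assms(6,7) by simp
  ultimately have "\<exists>X. box S (length ty) a X \<and> X \<subseteq> C" using main[OF assms(5) _ assms(8)] la assms(6) by metis
  then show ?thesis using assms(6) by simp
qed



end
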